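(* Every finite-dimensional complex regular evolution algebra $\mathcal{E}$ admits a non-zero idempotent, i.e. an element $u\neq 0$ with $u^2=u$.
   Context: An evolution algebra over $\mathbb{C}$ is a $\mathbb{C}$-algebra $\mathcal{E}$ admitting a basis $\{e_1,\dots,e_n\}$ (a natural basis) such that $e_ie_j=0$ for all $i\neq j$. $\mathcal{E}$ is regular if $\mathcal{E}=\mathcal{E}^2$, equivalently the structure matrix $(a_{ij})$ defined by $e_i^2=\sum_j a_{ij}e_j$ is invertible. *)

theory Defs
  imports "HOL-Analysis.Analysis"
begin

text \<open>An n-dimensional complex evolution algebra, written in coordinates w.r.t. a natural
basis e_1..e_n (the standard basis of complex^'n, index type 'n of cardinality n).
The structure matrix A has entries A$i$j = a_ij, where e_i e_i = sum_j a_ij e_j and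
e_i e_j = 0 for i distinct from j.  Extending bilinearly, the product of x and y is
sum_i x_i y_i (e_i e_i), whose j-th coordinate is sum_i x_i y_i a_ij.\<close>

definition evol_mult :: "complex^'n^'n \<Rightarrow> complex^'n \<Rightarrow> complex^'n \<Rightarrow> complex^'n" where
  "evol_mult A x y = (\<chi> j. \<Sum>i\<in>UNIV. x$i * y$i * A$i$j)"

text \<open>Regular: the structure matrix is invertible (equivalently E = E^2).\<close>
definition evol_regular :: "complex^'n^'n \<Rightarrow> bool" where
  "evol_regular A \<longleftrightarrow> invertible A"

end

theory Submission
  imports Defs "HOL-Computational_Algebra.Fundamental_Theorem_Algebra"
begin


lemma card_minus_lt: "(k::'a::finite) \<in> T \<Longrightarrow> card T - Suc 0 < card T"
  using card_gt_0_iff[of T] by auto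

function Mb :: "('n::finite \<Rightarrow> 'n \<Rightarrow> complex) \<Rightarrow> 'n \<Rightarrow> 'n set \<Rightarrow> complex^('n set)" where
  "Mb b k T = (if k \<in> T then (\<Sum>l\<in>UNIV. b k l *s Mb b l (T - {k})) else axis (insert k T) 1)"
  by auto
termination
  by (relation "Wellfounded.measure (\<lambda>(b,k,T). card T)") (auto simp: card_minus_lt)

declare Mb.simps[simp del]

definition Mop :: "('n::finite \<Rightarrow> 'n \<Rightarrow> complex) \<Rightarrow> 'n \<Rightarrow> complex^('n set) \<Rightarrow> complex^('n set)" where
  "Mop b k v = (\<Sum>T\<in>UNIV. v$T *s Mb b k T)"

lemma Mop_add: "Mop b k (v + w) = Mop b k v + Mop b k w"
  by (simp add: Mop_def vector_sadd_rdistrib sum.distrib)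

lemma Mop_scale: "Mop b k (c *s v) = c *s Mop b k v"
  by (simp add: Mop_def vec.scale_sum_right)

definition lin :: "(complex^'m \<Rightarrow> complex^'m) \<Rightarrow> bool" where
  "lin f \<longleftrightarrow> (\<forall>x y. f (x + y) = f x + f y) \<and> (\<forall>c x. f (c *s x) = c *s f x)"

lemma lin_add: "lin f \<Longrightarrow> f (x + y) = f x + f y" by (simp add: lin_def)
lemma lin_scale: "lin f \<Longrightarrow> f (c *s x) = c *s f x" by (simp add: lin_def)
lemma lin_0: "lin f \<Longrightarrow> f 0 = 0"
  using lin_scale[of f 0 0] by simp
lemma lin_sum: "lin f \<Longrightarrow> f (\<Sum>i\<in>I. g i) = (\<Sum>i\<in>I. f (g i))"
  by (induction I rule: infinite_finite_induct) (auto simp: lin_0 lin_add)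
lemma lin_sum_scale: "lin f \<Longrightarrow> f (\<Sum>i\<in>I. c i *s g i) = (\<Sum>i\<in>I. c i *s f (g i))"
  by (simp add: lin_sum lin_scale)
lemma lin_diff: "lin f \<Longrightarrow> f (x - y) = f x - f y"
  using lin_add[of f "x - y" y] by simp

lemma Mop_lin: "lin (Mop b k)"
  by (simp add: lin_def Mop_add Mop_scale)

lemma Mop_sum: "Mop b k (\<Sum>i\<in>I. c i *s f i) = (\<Sum>i\<in>I. c i *s Mop b k (f i))"
  by (rule lin_sum_scale[OF Mop_lin])

lemma Mop_axis: "Mop b k (axis T 1) = Mb b k T"
proof -
  have "Mop b k (axis T 1) = (\<Sum>S\<in>UNIV. (if S = T then Mb b k T else 0))"
    unfolding Mop_def by (intro sum.cong) (auto simp: axis_def)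
  then show ?thesis by simp
qed

lemma Mb_notin: "k \<notin> T \<Longrightarrow> Mb b k T = axis (insert k T) 1"
  by (simp add: Mb.simps)

lemma Mb_in: "k \<in> T \<Longrightarrow> Mb b k T = (\<Sum>l\<in>UNIV. b k l *s Mb b l (T - {k}))"
  by (simp add: Mb.simps)


lemma Mop_Mb_comm: "Mop b i (Mb b j T) = Mop b j (Mb b i T)"
proof (induction "card T" arbitrary: T i j rule: less_induct)
  case less
  have IH: "\<And>S i j. card S < card T \<Longrightarrow> Mop b i (Mb b j S) = Mop b j (Mb b i S)"
    using less by blast
  have fin: "finite T" by simp
  have half: "Mop b i (Mb b j T) = Mop b j (Mb b i T)" if "i \<notin> T" "j \<in> T" for i j
  proof -
    have ij: "i \<noteq> j" using that by auto
    have c: "card (T - {j}) < card T" using that fin by (auto simp: card_minus_lt)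
    have "Mop b i (Mb b j T) = (\<Sum>l\<in>UNIV. b j l *s Mop b i (Mb b l (T - {j})))"
      using that by (simp add: Mb_in Mop_sum)
    also have "\<dots> = (\<Sum>l\<in>UNIV. b j l *s Mop b l (Mb b i (T - {j})))"
      using IH[OF c] by simp
    also have "\<dots> = (\<Sum>l\<in>UNIV. b j l *s Mb b l (insert i (T - {j})))"
      using that by (simp add: Mb_notin Mop_axis)
    also have "\<dots> = Mop b j (Mb b i T)"
      using that ij by (simp add: Mb_notin Mop_axis Mb_in insert_Diff_if)
    finally show ?thesis .
  qed
  show ?case
  proof (cases "i = j")
    case True then show ?thesis by simp
  next
    case ij: False
    show ?thesis
    proof (cases "i \<in> T"; cases "j \<in> T")
      assume "i \<in> T" "j \<in> T"
      have c: "card (T - {j} - {i}) < card T" "card (T - {i} - {j}) < card T"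
        "card (T - {j}) < card T" "card (T - {i}) < card T"
        using \<open>i \<in> T\<close> \<open>j \<in> T\<close> fin ij card_gt_0_iff[of T] by auto
      have "Mop b i (Mb b j T) = (\<Sum>l\<in>UNIV. b j l *s Mop b l (Mb b i (T - {j})))"
        using \<open>j \<in> T\<close> IH[OF c(3)] by (simp add: Mb_in Mop_sum)
      also have "\<dots> = (\<Sum>l\<in>UNIV. b j l *s (\<Sum>m\<in>UNIV. b i m *s Mop b l (Mb b m (T - {j} - {i}))))"
        using \<open>i \<in> T\<close> ij by (simp add: Mb_in Mop_sum)
      also have "\<dots> = (\<Sum>l\<in>UNIV. \<Sum>m\<in>UNIV. (b j l * b i m) *s Mop b l (Mb b m (T - {j} - {i})))"
        by (simp add: vec.scale_sum_right vector_smult_assoc)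
      also have "\<dots> = (\<Sum>m\<in>UNIV. \<Sum>l\<in>UNIV. (b i m * b j l) *s Mop b m (Mb b l (T - {i} - {j})))"
      proof -
        have e: "T - {j} - {i} = T - {i} - {j}" by auto
        have sw: "Mop b l (Mb b m (T - {j} - {i})) = Mop b m (Mb b l (T - {i} - {j}))" for l m
          using IH[OF c(1)] e by metis
        show ?thesis by (subst sum.swap) (simp add: sw mult.commute)
      qed
      also have "\<dots> = (\<Sum>m\<in>UNIV. b i m *s (\<Sum>l\<in>UNIV. b j l *s Mop b m (Mb b l (T - {i} - {j}))))"
        by (simp add: vec.scale_sum_right vector_smult_assoc)
      also have "\<dots> = (\<Sum>m\<in>UNIV. b i m *s Mop b m (Mb b j (T - {i})))"
        using \<open>j \<in> T\<close> ij by (simp add: Mb_in Mop_sum)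
      also have "\<dots> = Mop b j (Mb b i T)"
        using \<open>i \<in> T\<close> IH[OF c(4)] by (simp add: Mb_in Mop_sum)
      finally show ?thesis .
    next
      assume "i \<in> T" "j \<notin> T"
      then show ?thesis using half[of j i] by simp
    next
      assume "i \<notin> T" "j \<in> T"
      then show ?thesis using half[of i j] by simp
    next
      assume "i \<notin> T" "j \<notin> T"
      then show ?thesis using ij by (simp add: Mb_notin Mop_axis insert_commute)
    qed
  qed
qed

lemma Mop_comm: "Mop b i (Mop b j v) = Mop b j (Mop b i v)"
  by (simp add: Mop_def[of b j v] Mop_def[of b i v] Mop_sum Mop_Mb_comm)

lemma Mop_sq_Mb: "Mop b j (Mb b j T) = (\<Sum>l\<in>UNIV. b j l *s Mb b l T)"
proof (cases "j \<in> T")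
  case True
  have "Mop b j (Mb b j T) = (\<Sum>l\<in>UNIV. b j l *s Mop b l (Mb b j (T - {j})))"
    using True by (simp add: Mb_in Mop_sum Mop_Mb_comm)
  also have "\<dots> = (\<Sum>l\<in>UNIV. b j l *s Mb b l T)"
    using True by (simp add: Mb_notin Mop_axis insert_absorb)
  finally show ?thesis .
next
  case False
  then show ?thesis by (simp add: Mb_notin Mop_axis Mb_in)
qed

lemma Mop_sq: "Mop b j (Mop b j v) = (\<Sum>l\<in>UNIV. b j l *s Mop b l v)"
proof -
  have "Mop b j (Mop b j v) = (\<Sum>T\<in>UNIV. v$T *s (\<Sum>l\<in>UNIV. b j l *s Mb b l T))"
    by (simp add: Mop_def[of b j v] Mop_sum Mop_sq_Mb)
  also have "\<dots> = (\<Sum>l\<in>UNIV. b j l *s Mop b l v)"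
    unfolding Mop_def vec.scale_sum_right vector_smult_assoc
    by (subst sum.swap) (simp add: mult.commute)
  finally show ?thesis .
qed

lemma Mop_empty: "Mop b j (axis {} 1) = axis {j} 1"
  by (simp add: Mop_axis Mb_notin)



definition peval :: "(complex^'m \<Rightarrow> complex^'m) \<Rightarrow> complex poly \<Rightarrow> complex^'m \<Rightarrow> complex^'m" where
  "peval f p v = (\<Sum>i\<le>degree p. coeff p i *s (f^^i) v)"

lemma peval_bound: "degree p \<le> n \<Longrightarrow> peval f p v = (\<Sum>i\<le>n. coeff p i *s (f^^i) v)"
  unfolding peval_def by (rule sum.mono_neutral_left) (auto simp: coeff_eq_0)

lemma funpow_lin: "lin f \<Longrightarrow> lin (f^^i)"
  by (induction i) (auto simp: lin_def)

lemma funpow_lin_0: "lin f \<Longrightarrow> (f^^i) 0 = 0"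
  using lin_0[OF funpow_lin] by blast

lemma peval_commute: assumes "lin f" shows "f (peval f p v) = peval f p (f v)"
proof -
  have "f (peval f p v) = (\<Sum>i\<le>degree p. coeff p i *s f ((f^^i) v))"
    unfolding peval_def by (rule lin_sum_scale[OF assms])
  also have "\<dots> = peval f p (f v)"
    unfolding peval_def by (simp only: funpow_swap1)
  finally show ?thesis .
qed

lemma peval_factor:
  assumes "lin f"
  shows "peval f ([:-r,1:] * q) v = f (peval f q v) - r *s peval f q v"
proof -
  let ?n = "degree q"
  have d: "degree ([:-r,1:] * q) \<le> Suc ?n"
    using degree_mult_le[of "[:-r,1:]" q] by simp
  have pq: "[:-r,1:] * q = pCons 0 q - smult r q"
    by (simp add: mult_pCons_left)
  have "peval f ([:-r,1:] * q) v = (\<Sum>i\<le>Suc ?n. coeff ([:-r,1:] * q) i *s (f^^i) v)"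
    by (rule peval_bound[OF d])
  also have "\<dots> = (\<Sum>i\<le>Suc ?n. coeff (pCons 0 q) i *s (f^^i) v) - (\<Sum>i\<le>Suc ?n. (r * coeff q i) *s (f^^i) v)"
    unfolding pq by (simp add: vector_sub_rdistrib sum_subtractf)
  also have "(\<Sum>i\<le>Suc ?n. coeff (pCons 0 q) i *s (f^^i) v) = (\<Sum>i\<le>?n. coeff q i *s f ((f^^i) v))"
    by (subst sum.atMost_Suc_shift) simp
  also have "\<dots> = f (peval f q v)"
    unfolding peval_def by (simp add: lin_sum_scale[OF assms])
  also have "(\<Sum>i\<le>Suc ?n. (r * coeff q i) *s (f^^i) v) = r *s (\<Sum>i\<le>Suc ?n. coeff q i *s (f^^i) v)"
    by (simp add: vec.scale_sum_right vector_smult_assoc)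
  also have "(\<Sum>i\<le>Suc ?n. coeff q i *s (f^^i) v) = peval f q v"
    by (rule peval_bound[symmetric]) simp
  finally show ?thesis .
qed

lemma funpow_in:
  assumes "\<forall>x\<in>E. f x \<in> E" "v \<in> E" shows "(f^^i) v \<in> E"
  using assms by (induction i) auto

lemma peval_in:
  assumes "vec.subspace E" "\<forall>x\<in>E. f x \<in> E" "v \<in> E" shows "peval f p v \<in> E"
  unfolding peval_def
  by (intro vec.subspace_sum[OF assms(1)] vec.subspace_scale[OF assms(1)] funpow_in[OF assms(2,3)])

lemma root_factor:
  fixes p :: "complex poly"
  assumes "degree p > 0"
  obtains r q where "p = [:-r,1:] * q" "q \<noteq> 0" "degree p = Suc (degree q)"
proof -
  have "\<not> constant (poly p)" using assms constant_degree[of p] by simp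
  then obtain r where "poly p r = 0" using fundamental_theorem_of_algebra by blast
  then obtain q where pq: "p = [:-r,1:] * q" using poly_eq_0_iff_dvd by (metis dvdE)
  have "q \<noteq> 0" using pq assms by auto
  have E: "degree ([:-r,1:] * q) = degree [:-r,1:] + degree q"
    by (rule degree_mult_eq) (use \<open>q \<noteq> 0\<close> in auto)
  have d1: "degree [:-r,(1::complex):] = 1" by simp
  have "degree p = 1 + degree q" by (metis E d1 pq)
  then show ?thesis using that pq \<open>q \<noteq> 0\<close> by simp
qed

lemma eig_aux:
  assumes lf: "lin f" and E: "vec.subspace E" "\<forall>x\<in>E. f x \<in> E"
  shows "p \<noteq> 0 \<Longrightarrow> v \<in> E \<Longrightarrow> v \<noteq> 0 \<Longrightarrow> peval f p v = 0 \<Longrightarrow> \<exists>w r. w \<in> E \<and> w \<noteq> 0 \<and> f w = r *s w"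
proof (induction "degree p" arbitrary: p rule: less_induct)
  case less
  show ?case
  proof (cases "degree p = 0")
    case True
    then obtain c where "p = [:c:]" by (metis degree_eq_zeroE)
    then have "c \<noteq> 0" "c *s v = 0" using less.prems by (auto simp: peval_def)
    then have "v = 0" by (metis vector_smult_assoc vector_smult_lid field_class.field_inverse vector_smult_rzero)
    then show ?thesis using less.prems by simp
  next
    case False
    then obtain r q where pq0: "p = [:-r,1:] * q" "q \<noteq> 0" "degree p = Suc (degree q)"
      using root_factor by blast
    then have pq: "p = [:-r,1:] * q" "q \<noteq> 0" "degree q < degree p" by auto
    let ?w = "peval f q v"
    have "f ?w - r *s ?w = 0" using less.prems pq peval_factor[OF lf] by metis
    then have fw: "f ?w = r *s ?w" by simp
    show ?thesis
    proof (cases "?w = 0")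
      case True
      then show ?thesis using less.hyps[OF pq(3) pq(2)] less.prems by blast
    next
      case False
      then show ?thesis using fw peval_in[OF E less.prems(2)] by blast
    qed
  qed
qed

lemma nil_aux:
  assumes lf: "lin f" and noe: "\<forall>w r. w \<noteq> 0 \<longrightarrow> f w = r *s w \<longrightarrow> r = 0"
  shows "p \<noteq> 0 \<Longrightarrow> peval f p v = 0 \<Longrightarrow> (f^^degree p) v = 0"
proof (induction "degree p" arbitrary: p v rule: less_induct)
  case less
  show ?case
  proof (cases "degree p = 0")
    case True
    then obtain c where "p = [:c:]" by (metis degree_eq_zeroE)
    then have "c \<noteq> 0" "c *s v = 0" using less.prems by (auto simp: peval_def)
    then have "v = 0" by (metis vector_smult_assoc vector_smult_lid field_class.field_inverse vector_smult_rzero)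
    then show ?thesis using True by simp
  next
    case False
    then obtain r q where pq0: "p = [:-r,1:] * q" "q \<noteq> 0" "degree p = Suc (degree q)"
      using root_factor by blast
    then have pq: "p = [:-r,1:] * q" "q \<noteq> 0" "degree q < degree p" by auto
    have dp: "degree p = Suc (degree q)" using pq0 by simp
    let ?w = "peval f q v"
    have "f ?w - r *s ?w = 0" using less.prems pq peval_factor[OF lf] by metis
    then have fw: "f ?w = r *s ?w" by simp
    show ?thesis
    proof (cases "r = 0")
      case True
      then have "peval f q (f v) = 0" using fw peval_commute[OF lf] by simp
      then have "(f^^degree q) (f v) = 0" using less.hyps[OF pq(3) pq(2)] by blast
      then show ?thesis using dp by (simp add: funpow_Suc_right del: funpow.simps)
    next
      case False
      then have "?w = 0" using noe fw by blast
      then have "(f^^degree q) v = 0" using less.hyps[OF pq(3) pq(2)] by blast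
      then show ?thesis using dp lin_0[OF lf] by simp
    qed
  qed
qed



lemma sum_if_eq_scale: "(\<Sum>k\<le>(N::nat). (if j = k then 1 else 0) *s g k) = (if j \<le> N then g j else (0::complex^'m))"
proof -
  have "(\<Sum>k\<le>N. (if j = k then 1 else 0) *s g k) = (\<Sum>k\<le>N. if j = k then g k else 0)"
    by (intro sum.cong) auto
  then show ?thesis by simp
qed

lemma krylov:
  fixes f :: "complex^'m \<Rightarrow> complex^'m"
  shows "\<exists>p. p \<noteq> 0 \<and> degree p \<le> CARD('m) \<and> peval f p v = 0"
proof -
  define N where "N = CARD('m)"
  define g where "g i = (f^^i) v" for i
  show ?thesis
  proof (cases "inj_on g {..N}")
    case False
    then obtain i j where ij: "i \<le> N" "j \<le> N" "i \<noteq> j" "g i = g j"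
      unfolding inj_on_def by auto
    define p :: "complex poly" where "p = monom 1 j - monom 1 i"
    have "coeff p j = 1" using ij by (simp add: p_def coeff_monom)
    then have "p \<noteq> 0" by auto
    moreover have "degree p \<le> N"
      unfolding p_def using ij degree_diff_le degree_monom_le by (metis le_trans)
    moreover have "peval f p v = 0"
    proof -
      have "peval f p v = (\<Sum>k\<le>N. coeff p k *s g k)"
        using peval_bound[OF \<open>degree p \<le> N\<close>] by (simp add: g_def)
      also have "\<dots> = (\<Sum>k\<le>N. (if j = k then 1 else 0) *s g k) - (\<Sum>k\<le>N. (if i = k then 1 else 0) *s g k)"
        unfolding p_def by (simp add: coeff_monom vector_sub_rdistrib sum_subtractf)
      also have "\<dots> = 0" using ij by (simp only: sum_if_eq_scale) simp
      finally show ?thesis .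
    qed
    ultimately show ?thesis unfolding N_def by blast
  next
    case True
    define S where "S = g ` {..N}"
    have cS: "card S = Suc N" using True by (simp add: S_def card_image)
    have fS: "finite S" by (simp add: S_def)
    have "vec.dependent S"
    proof (rule ccontr)
      assume "\<not> vec.dependent S"
      then have "card S \<le> vec.dim S" using vec.independent_bound_general by blast
      also have "\<dots> \<le> N" unfolding N_def by (rule dim_subset_UNIV_cart_gen)
      finally show False using cS by simp
    qed
    then obtain u where u: "\<exists>x\<in>S. u x \<noteq> 0" "(\<Sum>x\<in>S. u x *s x) = 0"
      using vec.dependent_finite[OF fS] by blast
    define p :: "complex poly" where "p = (\<Sum>k\<le>N. monom (u (g k)) k)"
    have cp: "coeff p k = (if k \<le> N then u (g k) else 0)" for k
    proof -
      have "coeff p k = (\<Sum>i\<le>N. if i = k then u (g i) else 0)"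
        unfolding p_def by (simp add: coeff_sum coeff_monom)
      then show ?thesis by simp
    qed
    have dp: "degree p \<le> N" by (rule degree_le) (simp add: cp)
    obtain k0 where "k0 \<le> N" "u (g k0) \<noteq> 0" using u(1) S_def by auto
    then have "p \<noteq> 0" using cp[of k0] by auto
    moreover have "peval f p v = 0"
    proof -
      have "peval f p v = (\<Sum>k\<le>N. u (g k) *s g k)"
        using peval_bound[OF dp] by (simp add: g_def cp)
      also have "\<dots> = (\<Sum>x\<in>S. u x *s x)"
        unfolding S_def using sum.reindex[OF True, of "\<lambda>x. u x *s x"] by (simp add: comp_def)
      finally show ?thesis using u(2) by simp
    qed
    ultimately show ?thesis using dp unfolding N_def by blast
  qed
qed

lemma eig_in_sub:
  fixes f :: "complex^'m \<Rightarrow> complex^'m"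
  assumes "lin f" "vec.subspace E" "\<forall>x\<in>E. f x \<in> E" "v \<in> E" "v \<noteq> 0"
  shows "\<exists>w r. w \<in> E \<and> w \<noteq> 0 \<and> f w = r *s w"
  using krylov[of f v] eig_aux[OF assms(1-3)] assms(4,5) by blast

lemma nilp:
  fixes f :: "complex^'m \<Rightarrow> complex^'m"
  assumes lf: "lin f" and noe: "\<forall>w r. w \<noteq> 0 \<longrightarrow> f w = r *s w \<longrightarrow> r = 0"
  shows "(f^^CARD('m)) v = 0"
proof -
  obtain p where p: "p \<noteq> 0" "degree p \<le> CARD('m)" "peval f p v = 0" using krylov by blast
  have "(f^^degree p) v = 0" using nil_aux[OF lf noe p(1,3)] by blast
  then have "(f^^(CARD('m) - degree p)) ((f^^degree p) v) = 0" using funpow_lin_0[OF lf] by simp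
  then show ?thesis using p(2) by (simp add: funpow_add[symmetric, THEN fun_cong, simplified comp_def])
qed

lemma common_eig:
  fixes x :: "'n \<Rightarrow> complex^'m \<Rightarrow> complex^'m"
  assumes lin: "\<And>k. lin (x k)" and comm: "\<And>k l v. x k (x l v) = x l (x k v)"
  shows "finite K \<Longrightarrow> vec.subspace E \<Longrightarrow> (\<forall>k. \<forall>w\<in>E. x k w \<in> E) \<Longrightarrow> v \<in> E \<Longrightarrow> v \<noteq> 0 \<Longrightarrow>
     \<exists>w\<in>E. w \<noteq> 0 \<and> (\<forall>k\<in>K. \<exists>c. x k w = c *s w)"
proof (induction K arbitrary: E v rule: finite_induct)
  case empty
  then show ?case by blast
next
  case (insert j K)
  obtain w r where w: "w \<in> E" "w \<noteq> 0" "x j w = r *s w"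
    using eig_in_sub[OF lin insert.prems(1)] insert.prems(2-4) by blast
  define E' where "E' = {y\<in>E. x j y = r *s y}"
  have sub: "vec.subspace E'"
    unfolding vec.subspace_def E'_def
    using insert.prems(1) lin_add[OF lin] lin_scale[OF lin] lin_0[OF lin]
    by (auto simp: vec.subspace_0 vec.subspace_add vec.subspace_scale vector_add_ldistrib vector_smult_assoc mult.commute)
  have inv: "\<forall>k. \<forall>y\<in>E'. x k y \<in> E'"
    unfolding E'_def using insert.prems(2) comm lin_scale[OF lin] by auto
  obtain z where z: "z \<in> E'" "z \<noteq> 0" "\<forall>k\<in>K. \<exists>c. x k z = c *s z"
    using insert.IH[OF sub inv, of w] w unfolding E'_def by blast
  then show ?case unfolding E'_def by auto
qed



fun prodL :: "('n \<Rightarrow> 'v \<Rightarrow> 'v) \<Rightarrow> 'n list \<Rightarrow> 'v \<Rightarrow> 'v" where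
  "prodL x [] v = v"
| "prodL x (k#ks) v = x k (prodL x ks v)"

lemma scale_cancel:
  fixes z :: "complex^'m"
  assumes "c *s z = d *s z" "z \<noteq> 0" shows "c = d"
proof -
  obtain i where "z$i \<noteq> 0" using assms(2) by (metis vec_eq_iff zero_index)
  moreover have "c * z$i = d * z$i" using assms(1) by (metis vector_smult_component)
  ultimately show ?thesis by simp
qed

lemma nil_family:
  fixes x :: "'n::finite \<Rightarrow> complex^'m \<Rightarrow> complex^'m"
  assumes lin: "\<And>k. lin (x k)" and comm: "\<And>k l v. x k (x l v) = x l (x k v)"
    and nil: "\<And>k v. (x k ^^ D) v = 0"
    and rel: "\<And>j v. x j v = (\<Sum>i\<in>UNIV. a i j *s x i (x i v))"
  shows "x j v = 0"
proof -
  have powcomm: "x l ((x k^^c) w) = (x k^^c) (x l w)" for l k c w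
  proof (induction c)
    case 0 show ?case by simp
  next
    case (Suc c)
    have "x l ((x k^^Suc c) w) = x k (x l ((x k^^c) w))" by (simp only: funpow.simps comp_def comm)
    also have "\<dots> = (x k^^Suc c) (x l w)" by (simp only: Suc.IH funpow.simps comp_def)
    finally show ?case .
  qed
  have C2: "prodL x ks w = (x k^^count_list ks k) (prodL x (filter (\<lambda>l. l \<noteq> k) ks) w)" for ks k w
  proof (induction ks)
    case Nil show ?case by simp
  next
    case (Cons l ks)
    show ?case
    proof (cases "l = k")
      case True
      then show ?thesis using Cons.IH by simp
    next
      case False
      have "prodL x (l # ks) w = x l ((x k^^count_list ks k) (prodL x (filter (\<lambda>l. l \<noteq> k) ks) w))"
        using Cons.IH by simp
      also have "\<dots> = (x k^^count_list ks k) (x l (prodL x (filter (\<lambda>l. l \<noteq> k) ks) w))"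
        by (rule powcomm)
      finally show ?thesis using False by simp
    qed
  qed
  have C3: "(x k^^c) w = 0" if "D \<le> c" for k c w
  proof -
    have "(x k^^c) w = (x k^^(c - D)) ((x k^^D) w)"
      using that by (simp add: funpow_add[symmetric, THEN fun_cong, simplified comp_def])
    then show ?thesis using nil funpow_lin_0[OF lin] by simp
  qed
  have C4: "\<exists>k. D \<le> count_list ks k" if "CARD('n) * D \<le> length ks" for ks :: "'n list"
  proof (rule ccontr)
    assume "\<not> ?thesis"
    then have lt: "\<And>k. count_list ks k < D" by (simp add: not_le)
    have "length ks = (\<Sum>k\<in>UNIV. count_list ks k)" using sum_count_set[of ks UNIV] by simp
    also have "\<dots> < (\<Sum>k\<in>(UNIV::'n set). D)" by (rule sum_strict_mono) (auto simp: lt)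
    also have "\<dots> = CARD('n) * D" by simp
    finally show False using that by simp
  qed
  have C6: "\<forall>ks. ks \<noteq> [] \<longrightarrow> CARD('n) * D \<le> length ks + m \<longrightarrow> prodL x ks w = 0" for m w
  proof (induction m)
    case 0
    show ?case
    proof (intro allI impI)
      fix ks :: "'n list" assume "CARD('n) * D \<le> length ks + 0"
      then obtain k where "D \<le> count_list ks k" using C4 by auto
      then show "prodL x ks w = 0" using C2[of ks w k] C3 by simp
    qed
  next
    case (Suc m)
    show ?case
    proof (intro allI impI)
      fix ks :: "'n list" assume ks: "ks \<noteq> []" "CARD('n) * D \<le> length ks + Suc m"
      then obtain j ks' where ksj: "ks = j # ks'" by (cases ks) auto
      have "prodL x ks w = (\<Sum>i\<in>UNIV. a i j *s prodL x (i # i # ks') w)"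
        unfolding ksj prodL.simps by (rule rel)
      also have "\<dots> = 0"
      proof -
        have z: "prodL x (i # i # ks') w = 0" for i
        proof -
          have "CARD('n) * D \<le> length (i # i # ks') + m" using ks ksj by simp
          then show ?thesis using Suc.IH by blast
        qed
        show ?thesis by (simp only: z vector_smult_rzero sum.neutral_const)
      qed
      finally show "prodL x ks w = 0" .
    qed
  qed
  have "prodL x [j] v = 0" using C6[of "CARD('n) * D" v] by (metis le_add2 list.distinct(1))
  then show ?thesis by simp
qed



theorem theorem3p5:
  fixes A :: "complex^'n^'n"
  assumes "evol_regular A"
  shows "\<exists>u :: complex^'n. u \<noteq> 0 \<and> evol_mult A u u = u"
proof -
  obtain A' where A': "A' ** A = mat 1"
    using assms unfolding evol_regular_def invertible_def by blast
  define b where "b i l = A' $ l $ i" for i l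
  have inv: "(\<Sum>i\<in>UNIV. A$i$j * b i l) = (if l = j then 1 else 0)" for j l
  proof -
    have "(\<Sum>i\<in>UNIV. A$i$j * b i l) = (A' ** A) $ l $ j"
      by (simp add: b_def matrix_matrix_mult_def mult.commute)
    then show ?thesis using A' by (simp add: mat_def)
  qed
  define x where "x k = Mop b k" for k
  have lin: "lin (x k)" for k by (simp add: x_def Mop_lin)
  have comm: "x k (x l v) = x l (x k v)" for k l v by (simp add: x_def Mop_comm)
  have rel: "x j v = (\<Sum>i\<in>UNIV. A$i$j *s x i (x i v))" for j v
  proof -
    have "(\<Sum>i\<in>UNIV. A$i$j *s x i (x i v)) = (\<Sum>i\<in>UNIV. A$i$j *s (\<Sum>l\<in>UNIV. b i l *s x l v))"
      by (simp add: x_def Mop_sq)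
    also have "\<dots> = (\<Sum>l\<in>UNIV. (\<Sum>i\<in>UNIV. A$i$j * b i l) *s x l v)"
      by (simp add: vec.scale_sum_right vector_smult_assoc vec.scale_sum_left) (rule sum.swap)
    also have "\<dots> = (\<Sum>l\<in>UNIV. (if l = j then x l v else 0))"
      by (intro sum.cong) (auto simp: inv)
    finally show ?thesis by simp
  qed
  have "\<exists>k w r. w \<noteq> 0 \<and> x k w = r *s w \<and> r \<noteq> 0"
  proof (rule ccontr)
    assume "\<not> ?thesis"
    then have noe: "\<forall>w r. w \<noteq> 0 \<longrightarrow> x k w = r *s w \<longrightarrow> r = 0" for k by blast
    have nil: "(x k ^^ CARD('n set)) v = 0" for k v using nilp[where f="x k", OF lin noe] by blast
    obtain j :: 'n where True by blast
    have "x j (axis {} 1) = 0" using nil_family[where x=x and a="\<lambda>i j. A$i$j" and D="CARD('n set)", OF lin comm nil rel] by blast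
    moreover have "x j (axis {} 1) = axis {j} 1" by (simp add: x_def Mop_empty)
    ultimately show False by (simp add: axis_eq_0_iff)
  qed
  then obtain k w \<mu> where w: "w \<noteq> 0" "x k w = \<mu> *s w" "\<mu> \<noteq> 0" by blast
  define E where "E = {y. x k y = \<mu> *s y}"
  have sub: "vec.subspace E"
    unfolding vec.subspace_def E_def
    using lin_add[OF lin] lin_scale[OF lin] lin_0[OF lin]
    by (auto simp: vector_add_ldistrib vector_smult_assoc mult.commute)
  have invE: "\<forall>l. \<forall>y\<in>E. x l y \<in> E"
    unfolding E_def using comm lin_scale[OF lin] by auto
  obtain z where z: "z \<in> E" "z \<noteq> 0" "\<forall>l\<in>UNIV. \<exists>c. x l z = c *s z"
    using common_eig[where x=x, OF lin comm, where K=UNIV and E=E and v=w] sub invE w unfolding E_def by auto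
  define lam where "lam l = (SOME c. x l z = c *s z)" for l
  have lam: "x l z = lam l *s z" for l
    unfolding lam_def using z(3) by (metis (mono_tags) someI_ex UNIV_I)
  have lamk: "lam k = \<mu>"
  proof -
    have "lam k *s z = \<mu> *s z" using z(1) lam[of k] unfolding E_def by simp
    then show ?thesis using scale_cancel z(2) by blast
  qed
  have eq: "lam j = (\<Sum>i\<in>UNIV. lam i * lam i * A$i$j)" for j
  proof -
    have "lam j *s z = x j z" by (simp only: lam)
    also have "\<dots> = (\<Sum>i\<in>UNIV. A$i$j *s x i (x i z))" by (rule rel)
    also have "\<dots> = (\<Sum>i\<in>UNIV. lam i * lam i * A$i$j) *s z"
      by (simp add: lam lin_scale[OF lin] vector_smult_assoc vec.scale_sum_left mult.commute mult.left_commute)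
    finally show ?thesis using scale_cancel z(2) by blast
  qed
  define u where "u = (\<chi> l. lam l)"
  have "u \<noteq> 0" using lamk w(3) by (metis u_def vec_lambda_beta zero_index)
  moreover have "evol_mult A u u = u"
    unfolding evol_mult_def u_def by (simp add: vec_eq_iff eq[symmetric])
  ultimately show ?thesis by blast
qed


end
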